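(* Consider the generative logic with $\mu\to1$ in the setting below. Let $\Delta$ be a finite multiset of time-indexed formulas such that $E'(\Delta)\neq\emptyset$. Then for every $k\in\{1,\dots,K\}$, $$p(D=d_k\mid\Delta)=\begin{cases}\frac{1}{|E'(\Delta)|}&\text{if }k\in E'(\Delta),\\ 0&\text{otherwise.}\end{cases}$$
   Context: Let $\mathcal{L}$ be a propositional language and let $K,T\ge1$. There are data sequences $d_1,\dots,d_K$; repetitions are allowed, and data are identified by their index $k$. Each $d_k$ is associated with a sequence of models $m(d_k)=(m(d_k)^1,\dots,m(d_k)^T)$ of $\mathcal{L}$. The prior is $p(D=d_k)=1/K$. A time-indexed formula is written $\alpha^t$, with $\alpha\in\mathcal{L}$ and $1\le t\le T$. Write $[\![\alpha^t]\!]_k=1$ if $\alpha$ is true in $m(d_k)^t$, and $0$ otherwise. For $\mu\in(0,1)$ and a finite multiset $X$ of time-indexed formulas, define $$p(X\mid d_k,\mu)=\prod_{\alpha^t\in X}\mu^{[\![\alpha^t]\!]_k}(1-\mu)^{1-[\![\alpha^t]\!]_k}.$$ Then define $$p(D=d_k\mid\Delta)=\lim_{\mu\to1}\frac{p(\Delta\mid d_k,\mu)\,p(d_k)}{\sum_j p(\Delta\mid d_j,\mu)\,p(d_j)}.$$ An index $k$ is an evidence of $X$ if $[\![\alpha^t]\!]_k=1$ for all $\alpha^t\in X$. Let $E(X)$ be the set of such indices. $X$ is called founded if $E(X)\neq\emptyset$. Let $MFS(\Delta)$ be the set of nonempty founded sub-multisets $S\subseteq\Delta$ that have maximum cardinality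 among all nonempty founded sub-multisets of $\Delta$. Set $E'(\Delta)=\bigcup_{S\in MFS(\Delta)}E(S)$. This union is empty if $MFS(\Delta)=\emptyset$. *)

theory Defs
  imports "HOL-Analysis.Analysis" "HOL-Library.Multiset"
begin

datatype 'a form = Atom 'a | Bot | Neg "'a form" | Conj "'a form" "'a form"
  | Disj "'a form" "'a form" | Imp "'a form" "'a form"

fun holds :: "('a \<Rightarrow> bool) \<Rightarrow> 'a form \<Rightarrow> bool" where
  "holds v (Atom a) = v a"
| "holds v Bot = False"
| "holds v (Neg f) = (\<not> holds v f)"
| "holds v (Conj f g) = (holds v f \<and> holds v g)"
| "holds v (Disj f g) = (holds v f \<or> holds v g)"
| "holds v (Imp f g) = (holds v f \<longrightarrow> holds v g)"

text \<open>A time-indexed formula alpha^t is a pair (alpha, t).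
  m k t is the model m(d_k)^t.  truth value [[alpha^t]]_k:\<close>
definition tv :: "(nat \<Rightarrow> nat \<Rightarrow> ('a \<Rightarrow> bool)) \<Rightarrow> nat \<Rightarrow> 'a form \<times> nat \<Rightarrow> bool" where
  "tv m k x = holds (m k (snd x)) (fst x)"

definition likelihood :: "(nat \<Rightarrow> nat \<Rightarrow> ('a \<Rightarrow> bool)) \<Rightarrow> ('a form \<times> nat) multiset
    \<Rightarrow> nat \<Rightarrow> real \<Rightarrow> real" where
  "likelihood m X k \<mu> = (\<Prod>x\<in>#X. (if tv m k x then \<mu> else 1 - \<mu>))"

definition post_mu :: "nat \<Rightarrow> (nat \<Rightarrow> nat \<Rightarrow> ('a \<Rightarrow> bool)) \<Rightarrow> ('a form \<times> nat) multiset
    \<Rightarrow> nat \<Rightarrow> real \<Rightarrow> real" where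
  "post_mu K m \<Delta> k \<mu> = likelihood m \<Delta> k \<mu> * (1 / real K)
      / (\<Sum>j=1..K. likelihood m \<Delta> j \<mu> * (1 / real K))"

definition evidence :: "nat \<Rightarrow> (nat \<Rightarrow> nat \<Rightarrow> ('a \<Rightarrow> bool)) \<Rightarrow> ('a form \<times> nat) multiset
    \<Rightarrow> nat set" where
  "evidence K m X = {k \<in> {1..K}. \<forall>x\<in>#X. tv m k x}"

definition founded :: "nat \<Rightarrow> (nat \<Rightarrow> nat \<Rightarrow> ('a \<Rightarrow> bool)) \<Rightarrow> ('a form \<times> nat) multiset \<Rightarrow> bool" where
  "founded K m X \<longleftrightarrow> evidence K m X \<noteq> {}"

definition MFS :: "nat \<Rightarrow> (nat \<Rightarrow> nat \<Rightarrow> ('a \<Rightarrow> bool)) \<Rightarrow> ('a form \<times> nat) multiset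
    \<Rightarrow> ('a form \<times> nat) multiset set" where
  "MFS K m \<Delta> = {S. S \<subseteq># \<Delta> \<and> S \<noteq> {#} \<and> founded K m S \<and>
      (\<forall>S'. S' \<subseteq># \<Delta> \<and> S' \<noteq> {#} \<and> founded K m S' \<longrightarrow> size S' \<le> size S)}"

definition evidence' :: "nat \<Rightarrow> (nat \<Rightarrow> nat \<Rightarrow> ('a \<Rightarrow> bool)) \<Rightarrow> ('a form \<times> nat) multiset
    \<Rightarrow> nat set" where
  "evidence' K m \<Delta> = (\<Union>S\<in>MFS K m \<Delta>. evidence K m S)"

end

theory Submission
  imports Defs
begin

lemma lik_eq:
  "likelihood m X j \<mu> = \<mu> ^ size (filter_mset (tv m j) X) * (1 - \<mu>) ^ size (filter_mset (\<lambda>x. \<not> tv m j x) X)"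
  unfolding likelihood_def
  by (induction X) (auto simp: algebra_simps)

lemma size_split: "size (filter_mset (tv m j) X) + size (filter_mset (\<lambda>x. \<not> tv m j x) X) = size X"
  by (metis multiset_partition size_union)

lemma ev_size:
  assumes "S \<subseteq># \<Delta>" "k \<in> evidence K m S"
  shows "size S \<le> size (filter_mset (tv m k) \<Delta>)"
proof -
  have "S \<subseteq># filter_mset (tv m k) \<Delta>"
  proof (rule mset_subset_eqI)
    fix x
    show "count S x \<le> count (filter_mset (tv m k) \<Delta>) x"
    proof (cases "x \<in># S")
      case True
      then have "tv m k x" using assms(2) unfolding evidence_def by auto
      then show ?thesis using assms(1) by (simp add: mset_subset_eq_count)
    next
      case False
      then show ?thesis by (simp add: not_in_iff)
    qed
  qed
  then show ?thesis by (rule size_mset_mono)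
qed

theorem theorem3:
  fixes K T :: nat and m :: "nat \<Rightarrow> nat \<Rightarrow> ('a \<Rightarrow> bool)"
    and \<Delta> :: "('a form \<times> nat) multiset" and k :: nat
  assumes "K \<ge> 1" and "T \<ge> 1"
    and "\<forall>x\<in>#\<Delta>. 1 \<le> snd x \<and> snd x \<le> T"
    and "evidence' K m \<Delta> \<noteq> {}"
    and "k \<in> {1..K}"
  shows "(post_mu K m \<Delta> k \<longlongrightarrow>
           (if k \<in> evidence' K m \<Delta> then 1 / real (card (evidence' K m \<Delta>)) else 0))
         (at_left 1)"
proof -
  define F where "F j = filter_mset (tv m j) \<Delta>" for j
  define a where "a j = size (F j)" for j
  define n where "n = size \<Delta>"
  have FD: "F j \<subseteq># \<Delta>" for j unfolding F_def by simp
  have Fev: "j \<in> evidence K m (F j)" if "j \<in> {1..K}" for j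
    using that unfolding evidence_def F_def by auto
  from assms(4) obtain S k0 where S: "S \<in> MFS K m \<Delta>" and k0: "k0 \<in> evidence K m S"
    unfolding evidence'_def by auto
  have k0K: "k0 \<in> {1..K}" using k0 unfolding evidence_def by auto
  have Sprops: "S \<subseteq># \<Delta>" "S \<noteq> {#}" "founded K m S"
    "\<And>S'. S' \<subseteq># \<Delta> \<Longrightarrow> S' \<noteq> {#} \<Longrightarrow> founded K m S' \<Longrightarrow> size S' \<le> size S"
    using S unfolding MFS_def by auto
  have aS: "a j \<le> size S" if "j \<in> {1..K}" for j
  proof (cases "F j = {#}")
    case True then show ?thesis by (simp add: a_def)
  next
    case False
    have "founded K m (F j)" using Fev[OF that] unfolding founded_def by auto
    then show ?thesis using Sprops(4)[OF FD False] by (simp add: a_def)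
  qed
  have Sk0: "size S \<le> a k0" unfolding a_def F_def by (rule ev_size[OF Sprops(1) k0])
  define M where "M = a k0"
  have aM: "a j \<le> M" if "j \<in> {1..K}" for j using aS[OF that] Sk0 M_def by linarith
  have SM: "size S = M" using aS[OF k0K] Sk0 M_def by linarith
  have M1: "M \<ge> 1" using Sprops(2) SM by (metis One_nat_def Suc_leI neq0_conv size_eq_0_iff_empty)
  have Mn: "M \<le> n" unfolding M_def a_def n_def using FD size_mset_mono by blast
  have Eq: "evidence' K m \<Delta> = {j \<in> {1..K}. a j = M}"
  proof (intro equalityI subsetI)
    fix j assume "j \<in> evidence' K m \<Delta>"
    then obtain S' where S': "S' \<in> MFS K m \<Delta>" and j: "j \<in> evidence K m S'"
      unfolding evidence'_def by auto
    have jK: "j \<in> {1..K}" using j unfolding evidence_def by auto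
    have S'p: "S' \<subseteq># \<Delta>" "size S \<le> size S'"
      using S' Sprops(1-3) unfolding MFS_def by auto
    have "size S' \<le> a j" unfolding a_def F_def by (rule ev_size[OF S'p(1) j])
    with S'p(2) aM[OF jK] SM show "j \<in> {j \<in> {1..K}. a j = M}" using jK by auto
  next
    fix j assume j: "j \<in> {j \<in> {1..K}. a j = M}"
    hence jK: "j \<in> {1..K}" and aj: "a j = M" by auto
    have ne: "F j \<noteq> {#}" using aj M1 unfolding a_def by auto
    have "F j \<in> MFS K m \<Delta>"
      unfolding MFS_def
    proof (intro CollectI conjI allI impI)
      show "F j \<subseteq># \<Delta>" by (rule FD)
      show "F j \<noteq> {#}" by (rule ne)
      show "founded K m (F j)" using Fev[OF jK] unfolding founded_def by auto
      fix S' assume "S' \<subseteq># \<Delta> \<and> S' \<noteq> {#} \<and> founded K m S'"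
      then show "size S' \<le> size (F j)" using Sprops(4) SM aj a_def by auto
    qed
    then show "j \<in> evidence' K m \<Delta>" unfolding evidence'_def using Fev[OF jK] by auto
  qed
  define f where "f j \<mu> = \<mu> ^ a j * (1 - \<mu>) ^ (M - a j)" for j and \<mu> :: real
  have f1: "f j 1 = (if a j = M then 1 else 0)" if "j \<in> {1..K}" for j
    using aM[OF that] unfolding f_def by auto
  define E where "E = {j \<in> {1..K}. a j = M}"
  have sum1: "(\<Sum>j=1..K. f j 1) = real (card E)"
  proof -
    have "(\<Sum>j=1..K. f j 1) = (\<Sum>j=1..K. if a j = M then 1 else 0)"
      using f1 by (intro sum.cong) auto[2]
    also have "\<dots> = (\<Sum>j\<in>E. 1)" unfolding E_def by (rule sum.inter_filter[symmetric]) auto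
    finally show ?thesis by simp
  qed
  have Efin: "finite E" unfolding E_def by auto
  have Ene: "E \<noteq> {}" using Eq assms(4) E_def by auto
  have cardpos: "real (card E) \<noteq> 0" using Efin Ene by auto
  have lim: "((\<lambda>\<mu>. f k \<mu> / (\<Sum>j=1..K. f j \<mu>)) \<longlongrightarrow> f k 1 / (\<Sum>j=1..K. f j 1)) (at_left 1)"
  proof (rule tendsto_divide)
    have fl: "((\<lambda>\<mu>. f j \<mu>) \<longlongrightarrow> f j 1) (at_left 1)" for j
      unfolding f_def
      by (rule tendsto_mult[OF tendsto_power[OF tendsto_ident_at] tendsto_power[OF tendsto_diff[OF tendsto_const tendsto_ident_at]]])
    show "((\<lambda>\<mu>. f k \<mu>) \<longlongrightarrow> f k 1) (at_left 1)" by (rule fl)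
    show "((\<lambda>\<mu>. \<Sum>j=1..K. f j \<mu>) \<longlongrightarrow> (\<Sum>j=1..K. f j 1)) (at_left 1)"
      by (rule tendsto_sum) (rule fl)
    show "(\<Sum>j=1..K. f j 1) \<noteq> 0" using sum1 cardpos by simp
  qed
  have val: "f k 1 / (\<Sum>j=1..K. f j 1) = (if k \<in> evidence' K m \<Delta> then 1 / real (card (evidence' K m \<Delta>)) else 0)"
    using f1[OF assms(5)] sum1 Eq E_def assms(5) by auto
  have ev: "eventually (\<lambda>\<mu>. f k \<mu> / (\<Sum>j=1..K. f j \<mu>) = post_mu K m \<Delta> k \<mu>) (at_left 1)"
    using eventually_at_left_real[OF zero_less_one]
  proof (rule eventually_mono)
    fix \<mu> :: real assume "\<mu> \<in> {0<..<1}"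
    hence mu: "0 < \<mu>" "\<mu> < 1" by auto
    define c where "c = (1 - \<mu>) ^ (n - M) * (1 / real K)"
    have cpos: "c > 0" unfolding c_def using mu assms(1) by auto
    have L: "likelihood m \<Delta> j \<mu> * (1 / real K) = f j \<mu> * c" if "j \<in> {1..K}" for j
    proof -
      have e: "size (filter_mset (\<lambda>x. \<not> tv m j x) \<Delta>) = (M - a j) + (n - M)"
        using size_split[of m j \<Delta>] aM[OF that] Mn unfolding a_def F_def n_def by linarith
      have "likelihood m \<Delta> j \<mu> = \<mu> ^ a j * (1 - \<mu>) ^ ((M - a j) + (n - M))"
        unfolding lik_eq e by (simp add: a_def F_def)
      then show ?thesis unfolding f_def c_def by (simp only: power_add mult.assoc)
    qed
    have "post_mu K m \<Delta> k \<mu> = (f k \<mu> * c) / (\<Sum>j=1..K. f j \<mu> * c)"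
      unfolding post_mu_def L[OF assms(5)] using L by (intro arg_cong[where f="\<lambda>x. _ / x"] sum.cong) auto[2]
    also have "\<dots> = f k \<mu> / (\<Sum>j=1..K. f j \<mu>)"
      using cpos by (simp add: sum_distrib_right[symmetric])
    finally show "f k \<mu> / (\<Sum>j=1..K. f j \<mu>) = post_mu K m \<Delta> k \<mu>" by simp
  qed
  show ?thesis using tendsto_cong[OF ev] lim val by simp
qed

end
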